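(* Let $l\in\mathbb N$ and let $\overline{\Xi_l^{\pm}}\subset\mathbb{CP}^2_{(\mu:r:\theta)}$ be the projective closures of the affine curves $\Xi_l^\pm$. Then for $l\geq 4$ the only real singular points of $\overline{\Xi_l^{\pm}}$ are the two points $p_\pm=(1:\pm1:0)$; for $l=1,2$ the curves $\overline{\Xi_l^{\pm}}$ are smooth; and for $l=3$ the only real singular point of $\overline{\Xi_3^{+}}$ is $p_-$ and the only real singular point of $\overline{\Xi_3^{-}}$ is $p_+$ ($p_+$ being a smooth point of $\overline{\Xi_3^+}$ and $p_-$ a smooth point of $\overline{\Xi_3^-}$). In particular, the real affine curves $\Xi_l^\pm(\mathbb R)$ are smooth.
   Context: For $l\in\mathbb N$ and $\mu\in\mathbb C$, let $\mathcal G_l$ be the $l\times l$ matrix with entries $(\mathcal G_l)_{i,l+1-i}=\mu$ for $i=1,\dots,l$, $(\mathcal G_l)_{i,l+2-i}=-(l+1-i)$ for $i=2,\dots,l$, and all other entries zero. Let $\Xi_l^\pm=\{(\mu,r)\in\mathbb C^2:\det(\mathcal G_l\pm r\,\mathrm{Id})=0\}$. The projective closure is taken in $\mathbb{CP}^2$ with homogeneous coordinates $(\mu:r:\theta)$, the affine chart being $\theta=1$; real points are those with real homogeneous coordinates. *)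

theory Defs
  imports Complex_Main "Jordan_Normal_Form.Determinant"
begin

text \<open>Bivariate complex polynomials in (mu, r) are represented as
  complex poly poly: the outer variable is r, the inner (coefficient) variable is mu.
  Matrix rows/columns are 0-indexed (paper index i corresponds to i-1).\<close>

definition Gmat :: "nat \<Rightarrow> complex poly poly mat" where
  "Gmat l = mat l l (\<lambda>(i, j).
     if j = l - 1 - i then [:[:0, 1:]:]
     else if 1 \<le> i \<and> j = l - i then [:[: - of_nat (l - i) :]:]
     else 0)"

text \<open>det (G_l + s r Id), s = 1 gives Xi^+, s = -1 gives Xi^-.\<close>
definition Xi_poly :: "nat \<Rightarrow> complex \<Rightarrow> complex poly poly" where
  "Xi_poly l s = det (Gmat l + [:0, [:s:]:] \<cdot>\<^sub>m 1\<^sub>m l)"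

definition aff_eval :: "complex poly poly \<Rightarrow> complex \<Rightarrow> complex \<Rightarrow> complex" where
  "aff_eval P mu r = poly (map_poly (\<lambda>q. poly q mu) P) r"

definition bcoeff :: "complex poly poly \<Rightarrow> nat \<Rightarrow> nat \<Rightarrow> complex" where
  "bcoeff P i j = coeff (coeff P j) i"

definition tdeg :: "complex poly poly \<Rightarrow> nat" where
  "tdeg P = Max {i + j | i j. bcoeff P i j \<noteq> 0}"

text \<open>Homogenization: defining polynomial of the projective closure in CP^2 with
  coordinates (mu : r : theta).\<close>
definition homog :: "complex poly poly \<Rightarrow> complex \<Rightarrow> complex \<Rightarrow> complex \<Rightarrow> complex" where
  "homog P mu r th = (\<Sum>j\<le>degree P. \<Sum>i\<le>degree (coeff P j).
      bcoeff P i j * mu ^ i * r ^ j * th ^ (tdeg P - i - j))"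

definition proj_singular ::
  "(complex \<Rightarrow> complex \<Rightarrow> complex \<Rightarrow> complex) \<Rightarrow> complex \<Rightarrow> complex \<Rightarrow> complex \<Rightarrow> bool" where
  "proj_singular F a b c \<longleftrightarrow> (a, b, c) \<noteq> (0, 0, 0) \<and> F a b c = 0 \<and>
     ((\<lambda>x. F x b c) has_field_derivative 0) (at a) \<and>
     ((\<lambda>y. F a y c) has_field_derivative 0) (at b) \<and>
     ((\<lambda>z. F a b z) has_field_derivative 0) (at c)"

definition real_proj_singular :: "complex poly poly \<Rightarrow> real \<Rightarrow> real \<Rightarrow> real \<Rightarrow> bool" where
  "real_proj_singular P a b c \<longleftrightarrow> proj_singular (homog P) (of_real a) (of_real b) (of_real c)"

definition is_point_1s0 :: "real \<Rightarrow> real \<Rightarrow> real \<Rightarrow> real \<Rightarrow> bool" where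
  "is_point_1s0 s a b c \<longleftrightarrow> (\<exists>t. t \<noteq> 0 \<and> a = t \<and> b = s * t \<and> c = 0)"

end

theory Submission
  imports Defs
begin

definition tri :: "nat \<Rightarrow> (nat \<Rightarrow> 'a) \<Rightarrow> (nat \<Rightarrow> 'a) \<Rightarrow> (nat \<Rightarrow> 'a) \<Rightarrow> 'a::comm_ring_1 mat" where
 "tri n d e f = mat n n (\<lambda>(i,j). if i = j then d i else if j = Suc i then e i else if i = Suc j then f j else 0)"

lemma tri_carrier[simp]: "tri n d e f \<in> carrier_mat n n" by (simp add: tri_def)

lemma det_tri0: "det (tri 0 d e f) = 1" by (simp add: det_dim_zero)

lemma det_tri1: "det (tri (Suc 0) d e f) = d 0"
  by (subst det_single[of _]) (auto simp: tri_def)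

lemma det_tri: "det (tri (Suc (Suc n)) d e f) = d (Suc n) * det (tri (Suc n) d e f) - e n * f n * det (tri n d e f)"
proof -
  let ?A = "tri (Suc (Suc n)) d e f"
  define B where "B = mat_delete ?A (Suc n) n"
  have B: "B \<in> carrier_mat (Suc n) (Suc n)" unfolding B_def using mat_delete_carrier[OF tri_carrier[of "Suc (Suc n)" d e f]] by simp
  have d1: "mat_delete ?A (Suc n) (Suc n) = tri (Suc n) d e f"
    by (rule eq_matI) (auto simp: mat_delete_def tri_def)
  have d2: "mat_delete B n n = tri n d e f"
    by (rule eq_matI) (auto simp: B_def mat_delete_def tri_def)
  have "det B = (\<Sum>i<Suc n. B $$ (i,n) * cofactor B i n)"
    by (rule laplace_expansion_column[OF B]) simp
  also have "\<dots> = B $$ (n,n) * cofactor B n n"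
    by (simp add: B_def mat_delete_def tri_def)
  also have "\<dots> = e n * det (tri n d e f)"
  proof -
    have "B $$ (n,n) = e n" by (simp add: B_def mat_delete_def tri_def)
    then show ?thesis by (simp add: cofactor_def d2)
  qed
  finally have dB: "det B = e n * det (tri n d e f)" .
  have "det ?A = (\<Sum>j<Suc (Suc n). ?A $$ (Suc n,j) * cofactor ?A (Suc n) j)"
    by (rule laplace_expansion_row) auto
  also have "\<dots> = ?A $$ (Suc n, n) * cofactor ?A (Suc n) n + ?A $$ (Suc n, Suc n) * cofactor ?A (Suc n) (Suc n)"
    by (simp add: tri_def)
  also have "\<dots> = f n * (- det B) + d (Suc n) * det (tri (Suc n) d e f)"
  proof -
    have "?A $$ (Suc n, n) = f n" "?A $$ (Suc n, Suc n) = d (Suc n)" by (auto simp: tri_def)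
    then show ?thesis by (simp add: cofactor_def d1 B_def)
  qed
  finally show ?thesis using dB by (simp add: algebra_simps)
qed

definition sg :: "nat \<Rightarrow> nat \<Rightarrow> nat" where
  "sg l k = (if k < l then (if even k then k div 2 else l - 1 - k div 2) else k)"

lemma sg_cases: obtains (ev) m where "k = 2*m" "sg l k = (if k < l then m else k)"
  | (od) m where "k = 2*m+1" "sg l k = (if k < l then l - 1 - m else k)"
proof (cases "even k")
  case True then obtain m where "k = 2*m" by blast
  then show ?thesis using ev[of m] by (simp add: sg_def)
next
  case False then obtain m where "k = 2*m+1" using oddE by blast
  then show ?thesis using od[of m] by (simp add: sg_def)
qed

lemma sg_lt: "k < l \<Longrightarrow> sg l k < l"
  by (rule sg_cases[where k=k and l=l]) auto

lemma sg_inj: "i < l \<Longrightarrow> j < l \<Longrightarrow> sg l i = sg l j \<Longrightarrow> i = j"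
  by (rule sg_cases[where k=i and l=l]; rule sg_cases[where k=j and l=l]) auto


lemma sg_permutes: "sg l permutes {0..<l}"
proof -
  have inj: "inj_on (sg l) {0..<l}"
  proof (rule inj_onI)
    fix x y assume "x \<in> {0..<l}" "y \<in> {0..<l}" "sg l x = sg l y"
    then show "x = y" using sg_inj[of x l y] by simp
  qed
  have sub: "sg l ` {0..<l} \<subseteq> {0..<l}" using sg_lt by auto
  have "sg l ` {0..<l} = {0..<l}" by (rule endo_inj_surj[OF _ sub inj]) simp
  then have "bij_betw (sg l) {0..<l} {0..<l}" using inj by (simp add: bij_betw_def)
  then show ?thesis by (rule bij_imp_permutes) (simp add: sg_def)
qed

lemma sg_adj: assumes "i < l" "j < l"
  and "sg l j = l - 1 - sg l i \<or> (1 \<le> sg l i \<and> sg l j = l - sg l i)"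
  shows "j = i \<or> j = Suc i \<or> i = Suc j"
proof (rule sg_cases[where k=i and l=l]; rule sg_cases[where k=j and l=l])
  fix m n assume "i = 2*m" "sg l i = (if i < l then m else i)" "j = 2*n" "sg l j = (if j < l then n else j)"
  with assms show ?thesis by simp arith
next
  fix m n assume "i = 2*m" "sg l i = (if i < l then m else i)" "j = 2*n+1" "sg l j = (if j < l then l - 1 - n else j)"
  with assms show ?thesis by simp arith
next
  fix m n assume "i = 2*m+1" "sg l i = (if i < l then l - 1 - m else i)" "j = 2*n" "sg l j = (if j < l then n else j)"
  with assms show ?thesis by simp arith
next
  fix m n assume "i = 2*m+1" "sg l i = (if i < l then l - 1 - m else i)" "j = 2*n+1" "sg l j = (if j < l then l - 1 - n else j)"
  with assms show ?thesis by simp arith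
qed

lemma det_perm_sim: assumes A: "A \<in> carrier_mat n n" and p: "p permutes {0..<n}"
  shows "det (mat n n (\<lambda>(i,j). A $$ (p i, p j))) = det A"
proof -
  define B where "B = mat n n (\<lambda>(i,j). A $$ (i, p j))"
  have B: "B \<in> carrier_mat n n" by (simp add: B_def)
  have pn: "i < n \<Longrightarrow> p i < n" for i using p by (meson atLeastLessThan_iff permutes_in_image zero_le)
  have 1: "mat n n (\<lambda>(i,j). A $$ (p i, p j)) = mat n n (\<lambda>(i,j). B $$ (p i, j))"
    by (rule eq_matI) (auto simp: B_def pn)
  have "B\<^sup>T = mat n n (\<lambda>(i,j). A\<^sup>T $$ (p i, j))"
    by (rule eq_matI) (use A in \<open>auto simp: B_def pn\<close>)
  then have "det B = signof p * det A"
    using det_permute_rows[of "A\<^sup>T" n p] A p det_transpose[OF B] det_transpose[OF A] by auto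
  then have "det (mat n n (\<lambda>(i,j). A $$ (p i, p j))) = signof p * (signof p * det A)"
    unfolding 1 using det_permute_rows[OF B p] by simp
  also have "signof p * (signof p * det A) = det A"
    by (simp add: sign_def)
  finally show ?thesis .
qed

definition Xr :: "complex \<Rightarrow> complex poly poly" where "Xr s = [:0, [:s:]:]"
definition Mu :: "complex poly poly" where "Mu = [:[:0,1:]:]"
definition Amat :: "nat \<Rightarrow> complex \<Rightarrow> complex poly poly mat" where
  "Amat l s = Gmat l + [:0, [:s:]:] \<cdot>\<^sub>m 1\<^sub>m l"

lemma Xi_Amat: "Xi_poly l s = det (Amat l s)" by (simp add: Xi_poly_def Amat_def)

lemma Amat_carrier: "Amat l s \<in> carrier_mat l l" by (simp add: Amat_def Gmat_def)

lemma Amat_entry: "i < l \<Longrightarrow> j < l \<Longrightarrow> Amat l s $$ (i,j) =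
  (if j = l - 1 - i then Mu else if 1 \<le> i \<and> j = l - i then [:[: - of_nat (l - i) :]:] else 0)
  + (if i = j then Xr s else 0)"
  by (simp add: Amat_def Gmat_def Mu_def Xr_def)

definition dd where "dd l s i = Amat l s $$ (sg l i, sg l i)"
definition ee where "ee l s i = Amat l s $$ (sg l i, sg l (Suc i))"
definition ff where "ff l s i = Amat l s $$ (sg l (Suc i), sg l i)"

lemma Amat_tri: "mat l l (\<lambda>(i,j). Amat l s $$ (sg l i, sg l j)) = tri l (dd l s) (ee l s) (ff l s)"
proof (rule eq_matI)
  fix i j assume i: "i < dim_row (tri l (dd l s) (ee l s) (ff l s))" and j: "j < dim_col (tri l (dd l s) (ee l s) (ff l s))"
  then have il: "i < l" and jl: "j < l" by (auto simp: tri_def)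
  show "mat l l (\<lambda>(i,j). Amat l s $$ (sg l i, sg l j)) $$ (i, j) = tri l (dd l s) (ee l s) (ff l s) $$ (i, j)"
  proof (cases "j = i \<or> j = Suc i \<or> i = Suc j")
    case True
    then show ?thesis using il jl by (auto simp: tri_def dd_def ee_def ff_def)
  next
    case False
    then have "\<not> (sg l j = l - 1 - sg l i \<or> (1 \<le> sg l i \<and> sg l j = l - sg l i))"
      using sg_adj[OF il jl] by blast
    moreover have "sg l i \<noteq> sg l j" using sg_inj[OF il jl] False by auto
    ultimately show ?thesis using il jl False
      by (auto simp: tri_def Amat_entry sg_lt)
  qed
qed (auto simp: tri_def)

lemma Xi_tri: "Xi_poly l s = det (tri l (dd l s) (ee l s) (ff l s))"
  unfolding Xi_Amat Amat_tri[symmetric] using det_perm_sim[OF Amat_carrier sg_permutes] by simp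

definition Ec :: "nat \<Rightarrow> nat \<Rightarrow> complex" where
  "Ec l k = of_nat ((k div 2 + 1) * (l - 1 - k div 2))"
definition Epp :: "nat \<Rightarrow> nat \<Rightarrow> complex poly poly" where
  "Epp l k = (if even k then Mu^2 else [:[:Ec l k:]:])"
definition Dl :: "nat \<Rightarrow> complex poly poly" where
  "Dl l = (if odd l then Mu else [:[: - (of_nat l / 2) :]:])"

fun Cu :: "complex \<Rightarrow> nat \<Rightarrow> nat \<Rightarrow> complex poly poly" where
  "Cu s l 0 = 1"
| "Cu s l (Suc 0) = Xr s"
| "Cu s l (Suc (Suc k)) = Xr s * Cu s l (Suc k) - Epp l k * Cu s l k"

definition Cf :: "complex \<Rightarrow> nat \<Rightarrow> complex poly poly" where
  "Cf s l = Cu s l l + Dl l * Cu s l (l - 1)"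

lemma dd_lt: assumes "Suc i < l" shows "dd l s i = Xr s"
proof (rule sg_cases[where k=i and l=l])
  fix m assume "i = 2*m" "sg l i = (if i < l then m else i)"
  with assms show ?thesis by (auto simp: dd_def Amat_entry sg_lt)
next
  fix m assume "i = 2*m+1" "sg l i = (if i < l then l - 1 - m else i)"
  with assms show ?thesis by (auto simp: dd_def Amat_entry sg_lt)
qed

lemma dd_last: assumes "l \<ge> 1" shows "dd l s (l - 1) = Xr s + Dl l"
proof (rule sg_cases[where k="l-1" and l=l])
  fix m assume "l - 1 = 2*m" "sg l (l-1) = (if l - 1 < l then m else l - 1)"
  with assms show ?thesis by (auto simp: dd_def Amat_entry sg_lt Dl_def)
next
  fix m assume h: "l - 1 = 2*m+1" "sg l (l-1) = (if l - 1 < l then l - 1 - m else l - 1)"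
  then have l: "l = 2*m+2" by simp
  have e: "- 1 - (of_nat m :: complex) = - ((2 + 2 * of_nat m) / 2)" by (simp add: field_simps)
  with h l show ?thesis by (auto simp: dd_def Amat_entry sg_lt Dl_def)
qed

lemma eeff: assumes "Suc i < l" shows "ee l s i * ff l s i = Epp l i"
proof (rule sg_cases[where k=i and l=l])
  fix m assume h: "i = 2*m" "sg l i = (if i < l then m else i)"
  have "sg l (Suc i) = l - 1 - m" using h assms by (simp add: sg_def)
  with h assms show ?thesis by (auto simp: ee_def ff_def Amat_entry sg_lt Epp_def power2_eq_square)
next
  fix m assume h: "i = 2*m+1" "sg l i = (if i < l then l - 1 - m else i)"
  have "sg l (Suc i) = Suc m" using h assms by (simp add: sg_def)
  moreover have "Ec l i = (1 + of_nat m) * (of_nat l - 1 - of_nat m)"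
  proof -
    have q: "i div 2 = m" using h by simp
    have "Ec l i = of_nat (Suc m) * of_nat (l - Suc m)" unfolding Ec_def q of_nat_mult by simp
    also have "\<dots> = (1 + of_nat m) * (of_nat l - 1 - of_nat m)" using h assms by (simp add: of_nat_diff)
    finally show ?thesis .
  qed
  moreover have "of_nat (l - Suc m) = (of_nat l - 1 - of_nat m :: complex)"
    using h assms by (simp add: of_nat_diff)
  ultimately show ?thesis using h assms by (auto simp: ee_def ff_def Amat_entry sg_lt Epp_def algebra_simps)
qed

lemma det_tri_Cu: "k < l \<Longrightarrow> det (tri k (dd l s) (ee l s) (ff l s)) = Cu s l k"
proof (induction s l k rule: Cu.induct)
  case (1 s l) then show ?case by (simp add: det_tri0)
next
  case (2 s l) then show ?case by (simp add: det_tri1 dd_lt)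
next
  case (3 s l k)
  then show ?case by (simp add: det_tri dd_lt eeff)
qed

lemma Xi_Cf: assumes "l \<ge> 1" shows "Xi_poly l s = Cf s l"
proof (cases l)
  case 0 with assms show ?thesis by simp
next
  case (Suc k)
  show ?thesis
  proof (cases k)
    case 0
    with Suc show ?thesis using dd_last[of 1 s]
      by (simp add: Xi_tri det_tri1 Cf_def)
  next
    case (Suc k')
    with \<open>l = Suc k\<close> show ?thesis using dd_last[of l s]
      by (simp add: Xi_tri det_tri det_tri_Cu eeff Cf_def algebra_simps)
  qed
qed

lemma aff_eval_alt: "aff_eval P m r = poly (poly P [:r:]) m"
  unfolding aff_eval_def
  by (induction P) (auto simp: map_poly_pCons)

lemma aff_eval_add[simp]: "aff_eval (P + Q) m r = aff_eval P m r + aff_eval Q m r"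
  by (simp add: aff_eval_alt)
lemma aff_eval_diff[simp]: "aff_eval (P - Q) m r = aff_eval P m r - aff_eval Q m r"
  by (simp add: aff_eval_alt)
lemma aff_eval_mult[simp]: "aff_eval (P * Q) m r = aff_eval P m r * aff_eval Q m r"
  by (simp add: aff_eval_alt)
lemma aff_eval_1[simp]: "aff_eval 1 m r = 1"
  by (simp add: aff_eval_alt)
lemma aff_eval_Xr[simp]: "aff_eval (Xr s) m r = s * r"
  by (simp add: aff_eval_alt Xr_def)
lemma aff_eval_Mu[simp]: "aff_eval Mu m r = m"
  by (simp add: aff_eval_alt Mu_def)
lemma aff_eval_const[simp]: "aff_eval [:[:c:]:] m r = c"
  by (simp add: aff_eval_alt)

definition Ef :: "nat \<Rightarrow> nat \<Rightarrow> complex \<Rightarrow> complex \<Rightarrow> complex" where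
  "Ef l k a c = (if even k then a^2 else Ec l k * c^2)"

fun Hu :: "complex \<Rightarrow> nat \<Rightarrow> nat \<Rightarrow> complex \<Rightarrow> complex \<Rightarrow> complex \<Rightarrow> complex" where
  "Hu s l 0 a b c = 1"
| "Hu s l (Suc 0) a b c = s * b"
| "Hu s l (Suc (Suc k)) a b c = s * b * Hu s l (Suc k) a b c - Ef l k a c * Hu s l k a b c"

definition Df :: "nat \<Rightarrow> complex \<Rightarrow> complex \<Rightarrow> complex" where
  "Df l a c = (if odd l then a else - (of_nat l / 2) * c)"

definition Hf :: "complex \<Rightarrow> nat \<Rightarrow> complex \<Rightarrow> complex \<Rightarrow> complex \<Rightarrow> complex" where
  "Hf s l a b c = Hu s l l a b c + Df l a c * Hu s l (l - 1) a b c"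

lemma aff_Cu: "aff_eval (Cu s l k) m r = Hu s l k m r 1"
  by (induction s l k rule: Cu.induct) (auto simp: Epp_def Ef_def power2_eq_square)

lemma aff_Cf: "aff_eval (Cf s l) m r = Hf s l m r 1"
  by (simp add: Cf_def Hf_def aff_Cu Dl_def Df_def)

lemma Hu_homog: "c \<noteq> 0 \<Longrightarrow> Hu s l k a b c = c^k * Hu s l k (a/c) (b/c) 1"
proof (induction s l k a b c rule: Hu.induct)
  case (1 s l a b c) then show ?case by simp
next
  case (2 s l a b c) then show ?case by simp
next
  case (3 s l k a b c)
  have e: "Ef l k a c = c^2 * Ef l k (a/c) 1" using 3(3) by (simp add: Ef_def field_simps)
  show ?case using 3 unfolding Hu.simps e by (simp add: field_simps power2_eq_square)
qed

lemma Hf_homog: assumes "c \<noteq> 0" "l \<ge> 1" shows "Hf s l a b c = c^l * Hf s l (a/c) (b/c) 1"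
proof -
  have e: "Df l a c = c * Df l (a/c) 1" using assms by (simp add: Df_def field_simps)
  have p: "c^l = c * c^(l-1)" using assms by (cases l) auto
  show ?thesis unfolding Hf_def e using Hu_homog[OF assms(1)] p by (simp add: algebra_simps)
qed

lemma Ef_cont: "isCont (\<lambda>c. Ef l k a c) c0"
  by (cases "even k") (auto simp: Ef_def intro!: continuous_intros)
lemma Df_cont: "isCont (\<lambda>c. Df l a c) c0"
  by (cases "odd l") (auto simp: Df_def intro!: continuous_intros)

lemma Hu_cont: "isCont (\<lambda>c. Hu s l k a b c) c0"
proof (induction s l k a b c0 rule: Hu.induct)
  case (3 s l k a b c)
  have "isCont (\<lambda>x. s * b * Hu s l (Suc k) a b x - Ef l k a x * Hu s l k a b x) c"
    by (intro continuous_intros Ef_cont 3(1)[unfolded eta_contract_eq] 3(2)[unfolded eta_contract_eq])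
  then show ?case by simp
qed auto

lemma Hf_cont: "isCont (\<lambda>c. Hf s l a b c) c0"
  unfolding Hf_def by (auto intro!: continuous_intros Hu_cont Df_cont)

definition tdle :: "complex poly poly \<Rightarrow> nat \<Rightarrow> bool" where
  "tdle P n \<longleftrightarrow> (\<forall>i j. bcoeff P i j \<noteq> 0 \<longrightarrow> i + j \<le> n)"

lemma tdle_mono: "tdle P n \<Longrightarrow> n \<le> m \<Longrightarrow> tdle P m"
  unfolding tdle_def by force

lemma tdle_add: "tdle P n \<Longrightarrow> tdle Q n \<Longrightarrow> tdle (P + Q) n"
  unfolding tdle_def bcoeff_def by (metis add.right_neutral coeff_add)

lemma tdle_diff: "tdle P n \<Longrightarrow> tdle Q n \<Longrightarrow> tdle (P - Q) n"
  unfolding tdle_def bcoeff_def by (metis coeff_diff diff_zero)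

lemma bcoeff_mult: "bcoeff (P * Q) i j = (\<Sum>a\<le>j. \<Sum>b\<le>i. bcoeff P b a * bcoeff Q (i - b) (j - a))"
  unfolding bcoeff_def coeff_mult coeff_sum by simp

lemma tdle_mult: assumes "tdle P n" "tdle Q m" shows "tdle (P * Q) (n + m)"
  unfolding tdle_def
proof (intro allI impI)
  fix i j assume ne: "bcoeff (P * Q) i j \<noteq> 0"
  show "i + j \<le> n + m"
  proof (rule ccontr)
    assume big: "\<not> i + j \<le> n + m"
    have z: "bcoeff P b a * bcoeff Q (i - b) (j - a) = 0" if "a \<le> j" "b \<le> i" for a b
    proof (rule ccontr)
      assume "bcoeff P b a * bcoeff Q (i - b) (j - a) \<noteq> 0"
      then have "b + a \<le> n" "(i - b) + (j - a) \<le> m" using assms unfolding tdle_def by auto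
      with that big show False by linarith
    qed
    have "bcoeff (P * Q) i j = 0" unfolding bcoeff_mult using z by (intro sum.neutral ballI) auto
    with ne show False by simp
  qed
qed


lemma tdle_1: "tdle 1 0"
  unfolding tdle_def bcoeff_def by (auto simp: coeff_1 split: if_splits)
lemma tdle_Xr: "tdle (Xr s) 1"
  unfolding tdle_def bcoeff_def Xr_def by (auto simp: coeff_pCons split: nat.splits)
lemma tdle_Mu: "tdle Mu 1"
  unfolding tdle_def bcoeff_def Mu_def by (auto simp: coeff_pCons split: nat.splits)
lemma tdle_const: "tdle [:[:c:]:] 0"
  unfolding tdle_def bcoeff_def by (auto simp: coeff_pCons split: nat.splits)
lemma tdle_Epp: "tdle (Epp l k) 2"
  unfolding Epp_def using tdle_mult[OF tdle_Mu tdle_Mu] tdle_mono[OF tdle_const]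
  by (auto simp: power2_eq_square numeral_2_eq_2)
lemma tdle_Dl: "tdle (Dl l) 1"
  unfolding Dl_def using tdle_Mu tdle_mono[OF tdle_const] by auto

lemma tdle_Cu: "tdle (Cu s l k) k"
proof (induction s l k rule: Cu.induct)
  case (1 s l) then show ?case by (simp add: tdle_1)
next
  case (2 s l) then show ?case using tdle_Xr by simp
next
  case (3 s l k)
  have a: "tdle (Xr s * Cu s l (Suc k)) (Suc (Suc k))" using tdle_mult[OF tdle_Xr 3(1)] by simp
  have b: "tdle (Epp l k * Cu s l k) (Suc (Suc k))" using tdle_mult[OF tdle_Epp 3(2)] by simp
  show ?case using tdle_diff[OF a b] by simp
qed

lemma tdle_Cf: "l \<ge> 1 \<Longrightarrow> tdle (Cf s l) l"
  unfolding Cf_def using tdle_add[OF tdle_Cu tdle_mult[OF tdle_Dl tdle_Cu[of s l "l - 1"]]] by simp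

definition Epc :: "nat \<Rightarrow> nat \<Rightarrow> complex poly" where
  "Epc l k = (if even k then [:0,1:]^2 else [:Ec l k:])"
lemma Epp_Epc: "Epp l k = [:Epc l k:]"
  by (simp add: Epp_def Epc_def Mu_def power2_eq_square)
definition Dlc :: "nat \<Rightarrow> complex poly" where
  "Dlc l = (if odd l then [:0,1:] else [: - (of_nat l / 2) :])"
lemma Dl_Dlc: "Dl l = [:Dlc l:]"
  by (simp add: Dl_def Dlc_def Mu_def)
lemma Xr_mult: "Xr s * P = pCons 0 (smult [:s:] P)"
  by (simp add: Xr_def)

lemma Cu_lead: "degree (Cu s l k) \<le> k \<and> coeff (Cu s l k) k = [:s^k:]"
proof (induction s l k rule: Cu.induct)
  case (1 s l) then show ?case by simp
next
  case (2 s l) then show ?case by (simp add: Xr_def)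
next
  case (3 s l k)
  have d1: "degree (Xr s * Cu s l (Suc k)) \<le> Suc (Suc k)"
    unfolding Xr_mult using degree_pCons_le[of 0 "smult [:s:] (Cu s l (Suc k))"] degree_smult_le[of "[:s:]" "Cu s l (Suc k)"] 3(1) by linarith
  have d2: "degree (Epp l k * Cu s l k) \<le> Suc (Suc k)"
    unfolding Epp_Epc using degree_smult_le[of "Epc l k" "Cu s l k"] 3(2) by simp
  have d: "degree (Cu s l (Suc (Suc k))) \<le> Suc (Suc k)"
    using degree_diff_le[OF d1 d2] by simp
  have "coeff (Cu s l k) (Suc (Suc k)) = 0" using 3(2) by (intro coeff_eq_0) auto
  then have c: "coeff (Cu s l (Suc (Suc k))) (Suc (Suc k)) = [:s^Suc (Suc k):]"
    using 3 by (simp add: Xr_mult Epp_Epc)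
  show ?case using d c by simp
qed

lemma bcoeff_Cf_top: assumes "l \<ge> 1" shows "bcoeff (Cf s l) 0 l = s^l"
proof -
  have "coeff (Cu s l (l - 1)) l = 0" using Cu_lead[of s l "l-1"] assms by (intro coeff_eq_0) auto
  then show ?thesis using Cu_lead[of s l l] by (simp add: bcoeff_def Cf_def Dl_Dlc)
qed

lemma tdeg_Cf: assumes "l \<ge> 1" "s \<noteq> 0" shows "tdeg (Cf s l) = l"
  unfolding tdeg_def
proof (rule Max_eqI)
  have "{i + j |i j. bcoeff (Cf s l) i j \<noteq> 0} \<subseteq> {..l}" using tdle_Cf[OF assms(1), of s] unfolding tdle_def by auto
  then show "finite {i + j |i j. bcoeff (Cf s l) i j \<noteq> 0}" by (rule finite_subset) simp
  show "y \<le> l" if "y \<in> {i + j |i j. bcoeff (Cf s l) i j \<noteq> 0}" for y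
    using that tdle_Cf[OF assms(1), of s] unfolding tdle_def by auto
  show "l \<in> {i + j |i j. bcoeff (Cf s l) i j \<noteq> 0}"
  proof (rule CollectI, rule exI[of _ 0], rule exI[of _ l])
    show "l = 0 + l \<and> bcoeff (Cf s l) 0 l \<noteq> 0" using bcoeff_Cf_top[OF assms(1), of s] assms(2) by simp
  qed
qed

lemma poly_sum_le: "degree (p::complex poly) \<le> n \<Longrightarrow> poly p x = (\<Sum>i\<le>n. coeff p i * x^i)"
proof -
  assume "degree p \<le> n"
  then have "poly p x = poly (\<Sum>i\<le>n. monom (coeff p i) i) x" using poly_as_sum_of_monoms' by metis
  also have "\<dots> = (\<Sum>i\<le>n. coeff p i * x^i)" by (simp add: poly_sum Polynomial.poly_monom)
  finally show ?thesis .
qed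

lemma aff_eval_sum: "aff_eval P m r = (\<Sum>j\<le>degree P. \<Sum>i\<le>degree (coeff P j). bcoeff P i j * m^i * r^j)"
proof -
  have "aff_eval P m r = (\<Sum>j\<le>degree P. coeff (map_poly (\<lambda>q. poly q m) P) j * r^j)"
    unfolding aff_eval_def by (rule poly_sum_le) (rule map_poly_degree_leq)
  also have "\<dots> = (\<Sum>j\<le>degree P. poly (coeff P j) m * r^j)"
    by (simp add: coeff_map_poly)
  also have "\<dots> = (\<Sum>j\<le>degree P. \<Sum>i\<le>degree (coeff P j). bcoeff P i j * m^i * r^j)"
    by (simp add: poly_altdef bcoeff_def sum_distrib_right)
  finally show ?thesis .
qed

lemma homog_eq: assumes "tdle P (tdeg P)" "c \<noteq> 0"
  shows "homog P a b c = c^(tdeg P) * aff_eval P (a/c) (b/c)"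
proof -
  have t: "bcoeff P i j * a ^ i * b ^ j * c ^ (tdeg P - i - j) = c^(tdeg P) * (bcoeff P i j * (a/c)^i * (b/c)^j)" for i j
  proof (cases "bcoeff P i j = 0")
    case False
    then have le: "i + j \<le> tdeg P" using assms(1) unfolding tdle_def by auto
    define k where "k = tdeg P - i - j"
    have N: "tdeg P = k + i + j" using le unfolding k_def by simp
    have "bcoeff P i j * a ^ i * b ^ j * c ^ k = c^(k + i + j) * (bcoeff P i j * (a/c)^i * (b/c)^j)"
      using assms(2) by (simp add: power_add power_divide)
    then show ?thesis unfolding k_def[symmetric] N[symmetric] by simp
  qed simp
  show ?thesis unfolding homog_def aff_eval_sum t by (simp add: sum_distrib_left)
qed

lemma homog_cont: "isCont (\<lambda>c. homog P a b c) c0"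
  unfolding homog_def by (intro continuous_intros)

lemma cont_eq0: fixes f g :: "complex \<Rightarrow> complex"
  assumes "isCont f 0" "isCont g 0" "\<And>c. c \<noteq> 0 \<Longrightarrow> f c = g c" shows "f 0 = g 0"
proof -
  have "(f \<longlongrightarrow> f 0) (at 0)" using assms(1) by (simp add: isCont_def)
  moreover have "(f \<longlongrightarrow> g 0) (at 0)"
  proof -
    have "(g \<longlongrightarrow> g 0) (at 0)" using assms(2) by (simp add: isCont_def)
    moreover have "eventually (\<lambda>c. g c = f c) (at 0)" using assms(3) by (auto simp: eventually_at_filter)
    ultimately show ?thesis by (rule Lim_transform_eventually)
  qed
  ultimately show ?thesis by (rule tendsto_unique[rotated]) simp
qed

lemma homog_Hf: assumes "l \<ge> 1" "s \<noteq> 0" shows "homog (Cf s l) a b c = Hf s l a b c"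
proof -
  have ne: "homog (Cf s l) a b c = Hf s l a b c" if "c \<noteq> 0" for c
    using homog_eq[of "Cf s l" c a b] tdle_Cf[OF assms(1), of s] tdeg_Cf[OF assms] that
      Hf_homog[OF that assms(1)] by (simp add: aff_Cf)
  show ?thesis
  proof (cases "c = 0")
    case True
    have "(\<lambda>c. homog (Cf s l) a b c) 0 = (\<lambda>c. Hf s l a b c) 0"
      by (rule cont_eq0[OF homog_cont Hf_cont ne])
    then show ?thesis using True by simp
  qed (rule ne)
qed

fun Qu :: "complex \<Rightarrow> nat \<Rightarrow> complex \<Rightarrow> nat \<Rightarrow> complex poly" where
  "Qu s l m 0 = 1"
| "Qu s l m (Suc 0) = [:0, s:]"
| "Qu s l m (Suc (Suc k)) = [:0, s:] * Qu s l m (Suc k) - smult (Ef l k m 1) (Qu s l m k)"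

definition Qf :: "complex \<Rightarrow> nat \<Rightarrow> complex \<Rightarrow> complex poly" where
  "Qf s l m = Qu s l m l + smult (Df l m 1) (Qu s l m (l - 1))"

lemma poly_Qu: "poly (Qu s l m k) y = Hu s l k m y 1"
  by (induction s l m k rule: Qu.induct) (auto simp: algebra_simps)

lemma aff_Qf: "aff_eval (Cf s l) m y = poly (Qf s l m) y"
  by (simp add: aff_Cf Qf_def Hf_def poly_Qu)

definition Ecr :: "nat \<Rightarrow> nat \<Rightarrow> real" where
  "Ecr l k = real ((k div 2 + 1) * (l - 1 - k div 2))"
definition er :: "nat \<Rightarrow> real \<Rightarrow> nat \<Rightarrow> real" where
  "er l m k = (if even k then m^2 else Ecr l k)"

fun hr :: "real \<Rightarrow> nat \<Rightarrow> real \<Rightarrow> real \<Rightarrow> nat \<Rightarrow> real" where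
  "hr s l m r 0 = 1"
| "hr s l m r (Suc 0) = s * r"
| "hr s l m r (Suc (Suc k)) = s * r * hr s l m r (Suc k) - er l m k * hr s l m r k"

fun hdv :: "real \<Rightarrow> nat \<Rightarrow> real \<Rightarrow> real \<Rightarrow> nat \<Rightarrow> real" where
  "hdv s l m r 0 = 0"
| "hdv s l m r (Suc 0) = s"
| "hdv s l m r (Suc (Suc k)) = s * hr s l m r (Suc k) + s * r * hdv s l m r (Suc k) - er l m k * hdv s l m r k"

lemma Ef_real: "Ef l k (of_real m) 1 = of_real (er l m k)"
  by (simp add: Ef_def er_def Ec_def Ecr_def)

lemma Qu_real: "poly (Qu (of_real s) l (of_real m) k) (of_real r) = of_real (hr s l m r k)
  \<and> poly (pderiv (Qu (of_real s) l (of_real m) k)) (of_real r) = of_real (hdv s l m r k)"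
proof (induction s l m r k rule: hr.induct)
  case (1 s l m r) then show ?case by simp
next
  case (2 s l m r) then show ?case by (simp add: pderiv_pCons)
next
  case (3 s l m r k)
  then show ?case by (simp add: Ef_real pderiv_mult pderiv_pCons pderiv_diff pderiv_smult algebra_simps)
qed

definition wr where "wr s l m r k = hdv s l m r (Suc k) * hr s l m r k - hr s l m r (Suc k) * hdv s l m r k"

lemma wr_rec: "wr s l m r (Suc k) = s * (hr s l m r (Suc k))^2 + er l m k * wr s l m r k"
  by (simp add: wr_def algebra_simps power2_eq_square)

lemma wr_pos: assumes "s^2 = 1" "m \<noteq> 0" "k < l" shows "s * wr s l m r k > 0"
  using assms(3)
proof (induction k)
  case 0 then show ?case using assms(1) by (simp add: wr_def power2_eq_square)
next
  case (Suc k)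
  have e: "er l m k > 0"
  proof (cases "even k")
    case True then show ?thesis using assms(2) by (simp add: er_def)
  next
    case False
    have "k div 2 + 1 > 0" "l - 1 - k div 2 > 0" using Suc.prems by auto
    then have "0 < (k div 2 + 1) * (l - 1 - k div 2)" by (rule mult_pos_pos)
    then have "0 < Ecr l k" unfolding Ecr_def by (simp only: of_nat_0_less_iff)
    then show ?thesis using False by (simp add: er_def)
  qed
  have "s * wr s l m r (Suc k) = (hr s l m r (Suc k))^2 + er l m k * (s * wr s l m r k)"
    unfolding wr_rec using assms(1) by (simp add: algebra_simps power2_eq_square)
  moreover have "er l m k * (s * wr s l m r k) > 0" using e Suc by simp
  ultimately show ?case by (smt (verit) zero_le_power2)
qed

definition dlr :: "nat \<Rightarrow> real \<Rightarrow> real" where "dlr l m = (if odd l then m else - (real l / 2))"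
definition fr where "fr s l m r = hr s l m r l + dlr l m * hr s l m r (l - 1)"
definition fd where "fd s l m r = hdv s l m r l + dlr l m * hdv s l m r (l - 1)"

lemma Qf_real: "poly (Qf (of_real s) l (of_real m)) (of_real r) = of_real (fr s l m r)
  \<and> poly (pderiv (Qf (of_real s) l (of_real m))) (of_real r) = of_real (fd s l m r)"
proof -
  have "Df l (of_real m) 1 = of_real (dlr l m)" by (simp add: Df_def dlr_def)
  then show ?thesis using Qu_real[of s l m _ r] by (simp add: Qf_def fr_def fd_def pderiv_add pderiv_smult)
qed

lemma fd_ne_mnz: assumes "s^2 = 1" "m \<noteq> 0" "l \<ge> 1" "fr s l m r = 0" shows "fd s l m r \<noteq> 0"
proof -
  obtain k where l: "l = Suc k" using assms(3) by (cases l) auto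
  have "fd s l m r * hr s l m r k - fr s l m r * hdv s l m r k = wr s l m r k"
    unfolding fd_def fr_def wr_def l by (simp add: algebra_simps)
  then have "fd s l m r * hr s l m r k = wr s l m r k" using assms(4) by simp
  moreover have "s * wr s l m r k > 0" using wr_pos[OF assms(1,2), of k l r] l by simp
  ultimately show ?thesis by auto
qed

definition cc :: "nat \<Rightarrow> nat \<Rightarrow> real" where "cc l i = real (i * (l - i))"

lemma cc_mono: assumes "2*j+1 < l" shows "cc l j < cc l (Suc j)"
proof -
  obtain d where l: "l = 2*j+2+d" using assms by (metis add.commute less_imp_Suc_add add_Suc_right add_2_eq_Suc' mult_2 add_Suc Suc_eq_plus1)
  have "j * (l - j) < Suc j * (l - Suc j)" unfolding l by (simp add: algebra_simps)
  then show ?thesis unfolding cc_def by (simp only: of_nat_less_iff)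
qed

lemma cc_pos: assumes "2*j+1 < l" shows "cc l (Suc j) > 0"
proof -
  have "0 < Suc j * (l - Suc j)" using assms by simp
  then show ?thesis unfolding cc_def by (simp only: of_nat_0_less_iff)
qed

lemma Ecr_cc: "Ecr l (2*j+1) = cc l (Suc j)"
  unfolding Ecr_def cc_def by simp

lemma hr0_even: "hr s l 0 r (2*j+2) = s * r * hr s l 0 r (2*j+1)"
proof -
  have e: "2*j+2 = Suc (Suc (2*j))" "2*j+1 = Suc (2*j)" by simp_all
  show ?thesis unfolding e by (simp add: er_def)
qed
lemma hd0_even: "hdv s l 0 r (2*j+2) = s * hr s l 0 r (2*j+1) + s * r * hdv s l 0 r (2*j+1)"
proof -
  have e: "2*j+2 = Suc (Suc (2*j))" "2*j+1 = Suc (2*j)" by simp_all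
  show ?thesis unfolding e by (simp add: er_def)
qed
lemma hr0_odd: assumes "s^2 = 1" shows "hr s l 0 r (2*j+3) = (r^2 - cc l (Suc j)) * hr s l 0 r (2*j+1)"
proof -
  have "hr s l 0 r (2*j+3) = s * r * hr s l 0 r (2*j+2) - er l 0 (2*j+1) * hr s l 0 r (2*j+1)"
    by (simp add: numeral_3_eq_3 numeral_2_eq_2)
  also have "\<dots> = (s^2 * r^2 - cc l (Suc j)) * hr s l 0 r (2*j+1)"
    unfolding hr0_even er_def using Ecr_cc[of l j] by (simp add: algebra_simps power2_eq_square)
  finally show ?thesis using assms by simp
qed
lemma hd0_odd: assumes "s^2 = 1" shows "hdv s l 0 r (2*j+3) = 2 * r * hr s l 0 r (2*j+1) + (r^2 - cc l (Suc j)) * hdv s l 0 r (2*j+1)"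
proof -
  have "hdv s l 0 r (2*j+3) = s * hr s l 0 r (2*j+2) + s * r * hdv s l 0 r (2*j+2) - er l 0 (2*j+1) * hdv s l 0 r (2*j+1)"
    by (simp add: numeral_3_eq_3 numeral_2_eq_2)
  also have "\<dots> = s^2 * r * hr s l 0 r (2*j+1) + s^2 * r * hr s l 0 r (2*j+1) + (s^2 * r^2 - cc l (Suc j)) * hdv s l 0 r (2*j+1)"
    unfolding hr0_even hd0_even er_def using Ecr_cc[of l j] by (simp add: algebra_simps power2_eq_square)
  finally show ?thesis using assms by simp
qed

lemma S0: assumes "s^2 = 1" "2*j+1 \<le> l" "hr s l 0 r (2*j+1) = 0"
  shows "hdv s l 0 r (2*j+1) \<noteq> 0 \<and> r^2 \<le> cc l j"
  using assms(2,3)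
proof (induction j)
  case 0
  have "s \<noteq> 0" using assms(1) by auto
  with 0 show ?case by (simp add: cc_def)
next
  case (Suc j)
  have lt: "2*j+1 < l" using Suc.prems by simp
  have e3: "2 * Suc j + 1 = 2*j+3" by simp
  have A: "(r^2 - cc l (Suc j)) * hr s l 0 r (2*j+1) = 0" using Suc.prems(2) hr0_odd[OF assms(1)] e3 by metis
  show ?case
  proof (cases "hr s l 0 r (2*j+1) = 0")
    case True
    with Suc.IH lt have ih: "hdv s l 0 r (2*j+1) \<noteq> 0" "r^2 \<le> cc l j" by auto
    have "r^2 < cc l (Suc j)" using ih(2) cc_mono[OF lt] by simp
    then show ?thesis unfolding e3 hd0_odd[OF assms(1)] using True ih by simp
  next
    case False
    with A have r2: "r^2 = cc l (Suc j)" by simp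
    then have "r \<noteq> 0" using cc_pos[OF lt] by auto
    then show ?thesis unfolding e3 hd0_odd[OF assms(1)] using False r2 by simp
  qed
qed


lemma fd_ne_m0: assumes "s^2 = 1" "l \<ge> 1" "fr s l 0 r = 0" shows "fd s l 0 r \<noteq> 0"
proof (cases "odd l")
  case True
  then obtain j where l: "l = 2*j+1" by (metis oddE)
  have "hr s l 0 r (2*j+1) = 0" using assms(3) l by (simp add: fr_def dlr_def)
  then have "hdv s l 0 r (2*j+1) \<noteq> 0" using S0[OF assms(1)] l by simp
  then show ?thesis using l by (simp add: fd_def dlr_def)
next
  case False
  then obtain k where k: "l = 2*k" by blast
  then have "k \<ge> 1" using assms(2) by simp
  define j where "j = k - 1"
  have l: "l = 2*j+2" using k \<open>k \<ge> 1\<close> unfolding j_def by simp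
  have dl: "dlr l 0 = - (real j + 1)" using l by (simp add: dlr_def field_simps)
  have lm: "l - 1 = 2*j+1" using l by simp
  let ?A = "hr s l 0 r (2*j+1)" and ?B = "hdv s l 0 r (2*j+1)"
  have F: "fr s l 0 r = (s * r - (real j + 1)) * ?A"
    unfolding fr_def dl lm hr0_even[of s l r j, folded l] by (simp add: algebra_simps)
  have D: "fd s l 0 r = s * ?A + (s * r - (real j + 1)) * ?B"
    unfolding fd_def dl lm hd0_even[of s l r j, folded l] by (simp add: algebra_simps)
  have ccj: "cc l j < (real j + 1)^2"
  proof -
    have "j * (l - j) < (j+1)*(j+1)" unfolding l by (simp add: algebra_simps)
    then have "real (j * (l - j)) < real ((j+1)*(j+1))" by (simp only: of_nat_less_iff)
    then show ?thesis unfolding cc_def by (simp add: power2_eq_square algebra_simps)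
  qed
  show ?thesis
  proof (cases "?A = 0")
    case True
    then have h: "?B \<noteq> 0" "r^2 \<le> cc l j" using S0[OF assms(1), of j l r] l by auto
    have "s * r \<noteq> real j + 1"
    proof
      assume "s * r = real j + 1"
      then have "(s*r)^2 = (real j + 1)^2" by simp
      then have "r^2 = (real j + 1)^2" using assms(1) by (simp add: power_mult_distrib)
      with h ccj show False by simp
    qed
    then show ?thesis using D True h by simp
  next
    case False
    then have "s * r = real j + 1" using F assms(3) by simp
    then show ?thesis using D False assms(1) by auto
  qed
qed

lemma fd_ne: assumes "s^2 = 1" "l \<ge> 1" "fr s l m r = 0" shows "fd s l m r \<noteq> 0"
  using fd_ne_mnz[OF assms(1) _ assms(2,3)] fd_ne_m0[OF assms(1,2)] assms(3) by (cases "m = 0") auto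

lemma deriv_gu: assumes "(g has_field_derivative g') (at t)" "(u has_field_derivative u') (at t)"
  shows "((\<lambda>x. g x * u x ^ m) has_field_derivative (g' * u t ^ m + g t * (of_nat m * u' * u t ^ (m - 1)))) (at t)"
proof -
  have "((\<lambda>x. g x * u x ^ m) has_field_derivative g' * u t ^ m + of_nat m * (u' * u t ^ (m - Suc 0)) * g t) (at t)"
    by (intro DERIV_mult DERIV_power assms)
  then show ?thesis by (simp add: algebra_simps)
qed

lemma even_deriv0: fixes f :: "complex \<Rightarrow> complex"
  assumes ev: "\<And>z. f (- z) = f z" and d: "(f has_field_derivative D) (at 0)" shows "D = 0"
proof -
  have d': "(f has_field_derivative D) (at (- 0))" using d by (simp only: minus_zero)
  have 1: "((\<lambda>z. f (- z)) has_field_derivative D * (- 1)) (at 0)"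
    using DERIV_chain2[OF d' DERIV_minus[OF DERIV_ident]] by simp
  have 2: "(\<lambda>z. f (- z)) = f" by (intro ext) (rule ev)
  have "(f has_field_derivative - D) (at 0)" using 1 unfolding 2 by (simp only: mult_minus1_right)
  then have "D = - D" using DERIV_unique[OF d] by blast
  then show ?thesis by simp
qed

lemma deriv_cmul_cont: fixes h :: "complex \<Rightarrow> complex"
  assumes "isCont h 0" shows "((\<lambda>c. c * h c) has_field_derivative h 0) (at 0)"
proof -
  have "(h \<longlongrightarrow> h 0) (at 0)" using assms by (simp add: isCont_def)
  moreover have "eventually (\<lambda>y. h y = (y * h y - 0 * h 0) / (y - 0)) (at 0)"
    by (auto simp: eventually_at_filter)
  ultimately have "((\<lambda>y. (y * h y - 0 * h 0) / (y - 0)) \<longlongrightarrow> h 0) (at 0)"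
    by (rule Lim_transform_eventually)
  then show ?thesis by (simp add: has_field_derivative_iff)
qed

lemma Ef_even: "Ef l k a (- c) = Ef l k a c" by (simp add: Ef_def)

lemma Hu_even: "Hu s l k a b (- c) = Hu s l k a b c"
  by (induction s l k a b c rule: Hu.induct) (simp_all add: Ef_even)

lemma Hf_dc: assumes "l \<ge> 1" "((\<lambda>z. Hf s l a b z) has_field_derivative D) (at 0)"
  shows "D = (if odd l then 0 else - (of_nat l / 2) * Hu s l (l - 1) a b 0)"
proof (cases "odd l")
  case True
  have "Hf s l a b (- z) = Hf s l a b z" for z using True by (simp add: Hf_def Df_def Hu_even)
  then show ?thesis using even_deriv0[OF _ assms(2)] True by simp
next
  case False
  let ?h = "\<lambda>z. Hu s l (l - 1) a b z"
  have eq: "Hf s l a b z - Hf s l a b (- z) = z * (- of_nat l * ?h z)" for z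
    using False by (simp add: Hf_def Df_def Hu_even algebra_simps)
  have d': "(Hf s l a b has_field_derivative D) (at (- 0))" using assms(2) by (simp only: minus_zero)
  have "((\<lambda>z. Hf s l a b (- z)) has_field_derivative D * (- 1)) (at 0)"
    using DERIV_chain2[OF d' DERIV_minus[OF DERIV_ident]] by simp
  then have "((\<lambda>z. Hf s l a b z - Hf s l a b (- z)) has_field_derivative D - D * (- 1)) (at 0)"
    using assms(2) by (intro DERIV_diff) auto
  then have 1: "((\<lambda>z. z * (- of_nat l * ?h z)) has_field_derivative 2 * D) (at 0)"
    unfolding eq by simp
  have 2: "((\<lambda>z. z * (- of_nat l * ?h z)) has_field_derivative (- of_nat l * ?h 0)) (at 0)"
    by (rule deriv_cmul_cont) (intro continuous_intros Hu_cont)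
  have "2 * D = - of_nat l * ?h 0" using DERIV_unique[OF 1 2] .
  then show ?thesis using False by (simp add: field_simps)
qed

lemma Hu_c0: "Hu s l (2*j) a b 0 = ((s*b)^2 - a^2)^j \<and> Hu s l (2*j+1) a b 0 = s*b*((s*b)^2 - a^2)^j"
proof (induction j)
  case 0 then show ?case by simp
next
  case (Suc j)
  have e1: "2 * Suc j = Suc (Suc (2*j))" and e2: "2 * Suc j + 1 = Suc (Suc (2*j+1))" by simp_all
  have A: "Hu s l (2 * Suc j) a b 0 = ((s*b)^2 - a^2)^Suc j"
    unfolding e1 using Suc by (simp add: Ef_def power2_eq_square algebra_simps)
  have B: "Hu s l (2 * Suc j + 1) a b 0 = s*b*((s*b)^2 - a^2)^Suc j"
    unfolding e2 using Suc A[unfolded e1] by (simp add: Ef_def)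
  show ?case using A B by simp
qed

definition gfun :: "nat \<Rightarrow> complex \<Rightarrow> complex \<Rightarrow> complex \<Rightarrow> complex" where
  "gfun l s a b = (if odd l then s * b + a else 1)"

lemma Hf_c0: assumes "l \<ge> 1" shows "Hf s l a b 0 = gfun l s a b * ((s*b)^2 - a^2)^(l div 2)"
proof (cases "odd l")
  case True
  then obtain j where l: "l = 2*j+1" by (metis oddE)
  then have "l - 1 = 2*j" "l div 2 = j" by simp_all
  then show ?thesis using Hu_c0[of s l j a b] l True by (simp add: Hf_def Df_def gfun_def algebra_simps)
next
  case False
  then obtain k where k: "l = 2*k" by blast
  then show ?thesis using Hu_c0[of s l k a b] False by (simp add: Hf_def Df_def gfun_def)
qed

lemma homog_deriv_ex:
  "\<exists>D. ((\<lambda>z. homog P a b z) has_field_derivative D) (at c0)"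
  "\<exists>D. ((\<lambda>z. homog P a z c) has_field_derivative D) (at b0)"
  "\<exists>D. ((\<lambda>z. homog P z b c) has_field_derivative D) (at a0)"
  unfolding homog_def by (rule exI, (rule DERIV_sum DERIV_mult DERIV_power DERIV_ident DERIV_const)+)+

lemma s_real: assumes "s \<in> {1, -1::complex}" obtains s' where "s = of_real s'" "s'^2 = 1"
  using assms by (metis insertE singletonD of_real_1 of_real_minus power2_minus power_one)

lemma s_props: assumes "s \<in> {1, -1::complex}" shows "s \<noteq> 0" "s^2 = 1" "s * s = 1"
  using assms by auto

lemma homog_Xi: assumes "l \<ge> 1" "s \<in> {1, -1::complex}"
  shows "homog (Xi_poly l s) x y z = Hf s l x y z"
  using homog_Hf[OF assms(1) s_props(1)[OF assms(2)]] Xi_Cf[OF assms(1)] by simp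

lemma aff_smooth: assumes "l \<ge> 1" "s \<in> {1, -1::complex}"
  and F: "aff_eval (Xi_poly l s) (of_real mu) (of_real r) = 0"
  and D: "((\<lambda>y. aff_eval (Xi_poly l s) (of_real mu) y) has_field_derivative 0) (at (of_real r))"
  shows False
proof -
  obtain s' where s': "s = of_real s'" "s'^2 = 1" using s_real[OF assms(2)] .
  let ?Q = "Qf s l (of_real mu)"
  have eq: "(\<lambda>y. aff_eval (Xi_poly l s) (of_real mu) y) = (\<lambda>y. poly ?Q y)"
    using Xi_Cf[OF assms(1)] by (simp add: aff_Qf)
  have "((\<lambda>y. poly ?Q y) has_field_derivative poly (pderiv ?Q) (of_real r)) (at (of_real r))"
    by (rule poly_DERIV)
  with D have "poly (pderiv ?Q) (of_real r) = 0" unfolding eq using DERIV_unique by blast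
  moreover have "poly ?Q (of_real r) = 0" using F eq by metis
  ultimately have "fr s' l mu r = 0" "fd s' l mu r = 0" using Qf_real[of s' l mu r] s' by auto
  then show False using fd_ne[OF s'(2) assms(1)] by blast
qed

lemma proj_cne: assumes "l \<ge> 1" "s \<in> {1, -1::complex}" "c \<noteq> 0"
  shows "\<not> proj_singular (homog (Xi_poly l s)) (of_real a) (of_real b) (of_real c)"
proof
  assume ps: "proj_singular (homog (Xi_poly l s)) (of_real a) (of_real b) (of_real c)"
  obtain s' where s': "s = of_real s'" "s'^2 = 1" using s_real[OF assms(2)] .
  have s0: "s \<noteq> 0" using assms(2) by auto
  let ?A = "of_real a :: complex" and ?B = "of_real b :: complex" and ?C = "of_real c :: complex"
  have C: "?C \<noteq> 0" using assms(3) by simp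
  let ?Q = "Qf s l (?A / ?C)"
  have hb: "homog (Xi_poly l s) ?A y ?C = ?C^l * poly ?Q (y / ?C)" for y
    using homog_eq[of "Cf s l" ?C ?A y] tdle_Cf[OF assms(1), of s] tdeg_Cf[OF assms(1) s0] C
      Xi_Cf[OF assms(1)] by (simp add: aff_Qf)
  have "((\<lambda>y. ?C^l * poly ?Q (y / ?C)) has_field_derivative ?C^l * (poly (pderiv ?Q) (?B / ?C) * (1 / ?C))) (at ?B)"
    by (intro DERIV_cmult DERIV_chain2[OF poly_DERIV] DERIV_cdivide[where D=1, simplified] DERIV_ident)
  moreover have "((\<lambda>y. ?C^l * poly ?Q (y / ?C)) has_field_derivative 0) (at ?B)"
    using ps unfolding proj_singular_def hb by blast
  ultimately have "?C^l * (poly (pderiv ?Q) (?B / ?C) * (1 / ?C)) = 0" using DERIV_unique by blast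
  then have d: "poly (pderiv ?Q) (?B / ?C) = 0" using C by simp
  have "?C^l * poly ?Q (?B / ?C) = 0" using ps unfolding proj_singular_def hb by blast
  then have f: "poly ?Q (?B / ?C) = 0" using C by simp
  have "?A / ?C = of_real (a / c)" "?B / ?C = of_real (b / c)" by simp_all
  then have "fr s' l (a/c) (b/c) = 0" "fd s' l (a/c) (b/c) = 0" using d f Qf_real[of s' l "a/c" "b/c"] s' by auto
  then show False using fd_ne[OF s'(2) assms(1)] by blast
qed

lemma deriv_a0: assumes "l \<ge> 1"
  shows "((\<lambda>x. Hf s l x B 0) has_field_derivative
     ((if odd l then 1 else 0) * ((s*B)^2 - A^2)^(l div 2)
      + gfun l s A B * (of_nat (l div 2) * (- 2 * A) * ((s*B)^2 - A^2)^(l div 2 - 1)))) (at A)"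
proof -
  have e: "(\<lambda>x. Hf s l x B 0) = (\<lambda>x. gfun l s x B * ((s*B)^2 - x^2)^(l div 2))"
    using Hf_c0[OF assms] by (intro ext) simp
  have g: "((\<lambda>x. gfun l s x B) has_field_derivative (if odd l then 1 else 0)) (at A)"
    by (cases "odd l") (auto simp: gfun_def intro!: derivative_eq_intros)
  have u: "((\<lambda>x. (s*B)^2 - x^2) has_field_derivative (- 2 * A)) (at A)"
    by (auto intro!: derivative_eq_intros)
  show ?thesis unfolding e by (rule deriv_gu[OF g u])
qed

lemma deriv_b0: assumes "l \<ge> 1"
  shows "((\<lambda>y. Hf s l A y 0) has_field_derivative
     ((if odd l then s else 0) * ((s*B)^2 - A^2)^(l div 2)
      + gfun l s A B * (of_nat (l div 2) * (2 * s * s * B) * ((s*B)^2 - A^2)^(l div 2 - 1)))) (at B)"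
proof -
  have e: "(\<lambda>y. Hf s l A y 0) = (\<lambda>y. gfun l s A y * ((s*y)^2 - A^2)^(l div 2))"
    using Hf_c0[OF assms] by (intro ext) simp
  have g: "((\<lambda>y. gfun l s A y) has_field_derivative (if odd l then s else 0)) (at B)"
    by (cases "odd l") (auto simp: gfun_def intro!: derivative_eq_intros)
  have u: "((\<lambda>y. (s*y)^2 - A^2) has_field_derivative (2 * s * s * B)) (at B)"
    by (auto intro!: derivative_eq_intros simp: algebra_simps power2_eq_square)
  show ?thesis unfolding e by (rule deriv_gu[OF g u])
qed

lemma homog_dc: assumes "l \<ge> 1" "s \<in> {1, -1::complex}"
  shows "((\<lambda>z. homog (Xi_poly l s) A B z) has_field_derivative
           (if odd l then 0 else - (of_nat l / 2) * Hu s l (l - 1) A B 0)) (at 0)"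
proof -
  obtain D where D: "((\<lambda>z. homog (Xi_poly l s) A B z) has_field_derivative D) (at 0)"
    using homog_deriv_ex(1) by blast
  then have "((\<lambda>z. Hf s l A B z) has_field_derivative D) (at 0)" unfolding homog_Xi[OF assms] .
  from Hf_dc[OF assms(1) this] D show ?thesis by simp
qed

lemma c0_val: assumes "l \<ge> 1" "s \<in> {1, -1::complex}" "homog (Xi_poly l s) A B 0 = 0"
  shows "(s*B)^2 - A^2 = 0"
proof -
  have "gfun l s A B * ((s*B)^2 - A^2)^(l div 2) = 0" using assms homog_Xi Hf_c0 by metis
  then have "gfun l s A B = 0 \<or> (s*B)^2 - A^2 = 0" by (metis mult_eq_0_iff power_eq_0_iff)
  then show ?thesis
  proof
    assume "gfun l s A B = 0"
    then have "odd l" "s * B = - A" by (auto simp: gfun_def split: if_splits simp: eq_neg_iff_add_eq_0 add.commute)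
    then show ?thesis by simp
  qed
qed

lemma nonzero_a: assumes "(of_real a :: complex, of_real b :: complex, of_real c :: complex) \<noteq> (0, 0, 0)"
  "c = 0" "b^2 = a^2" shows "a \<noteq> 0"
  using assms by auto

lemma c0_real: assumes "l \<ge> 1" "s \<in> {1, -1::complex}"
  and ps: "proj_singular (homog (Xi_poly l s)) (of_real a) (of_real b) (of_real c)"
  obtains s' where "s = of_real s'" "s'^2 = 1" "c = 0" "a \<noteq> 0" "b^2 = a^2" "(s' * b)^2 = a^2"
proof -
  obtain s' where s': "s = of_real s'" "s'^2 = 1" using s_real[OF assms(2)] .
  have c: "c = 0" using proj_cne[OF assms(1,2)] ps by blast
  have "homog (Xi_poly l s) (of_real a) (of_real b) 0 = 0" using ps c unfolding proj_singular_def by simp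
  from c0_val[OF assms(1,2) this] have "(of_real s' * of_real b)^2 - (of_real a :: complex)^2 = 0" using s' by simp
  then have "of_real ((s' * b)^2 - a^2) = (0::complex)" by simp
  then have sb: "(s' * b)^2 = a^2" by (simp only: of_real_eq_0_iff)
  then have b: "b^2 = a^2" using s' by (simp add: power_mult_distrib)
  have "a \<noteq> 0" using ps c b unfolding proj_singular_def by auto
  with that s' c b sb show ?thesis by blast
qed

lemma part4: assumes l: "l \<ge> 4" and s: "s \<in> {1, -1::complex}"
  shows "real_proj_singular (Xi_poly l s) a b c \<longleftrightarrow> (is_point_1s0 1 a b c \<or> is_point_1s0 (-1) a b c)"
proof
  have l1: "l \<ge> 1" using l by simp
  assume "real_proj_singular (Xi_poly l s) a b c"
  then have ps: "proj_singular (homog (Xi_poly l s)) (of_real a) (of_real b) (of_real c)"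
    by (simp add: real_proj_singular_def)
  from c0_real[OF l1 s ps] obtain s' where h: "c = 0" "a \<noteq> 0" "b^2 = a^2" by blast
  then have "b = a \<or> b = - a" by (simp add: power2_eq_iff)
  then show "is_point_1s0 1 a b c \<or> is_point_1s0 (-1) a b c"
    using h by (auto simp: is_point_1s0_def)
next
  have l1: "l \<ge> 1" using l by simp
  have m2: "l div 2 \<ge> 2" using l by simp
  assume "is_point_1s0 1 a b c \<or> is_point_1s0 (-1) a b c"
  then obtain t where t: "t \<noteq> 0" "a = t" "b = t \<or> b = - t" "c = 0" by (auto simp: is_point_1s0_def)
  let ?A = "of_real a :: complex" and ?B = "of_real b :: complex"
  have s2: "s^2 = 1" "s * s = 1" using s by auto
  have u0: "(s * ?B)^2 - ?A^2 = 0" using t s2 by (auto simp: power_mult_distrib)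
  have A0: "?A \<noteq> 0" using t by simp
  have z1: "((s * ?B)^2 - ?A^2)^(l div 2) = 0" using u0 m2 by simp
  have z2: "((s * ?B)^2 - ?A^2)^(l div 2 - 1) = 0" using u0 m2 by simp
  have F: "homog (Xi_poly l s) ?A ?B 0 = 0" unfolding homog_Xi[OF l1 s] Hf_c0[OF l1] z1 by simp
  have Da: "((\<lambda>x. homog (Xi_poly l s) x ?B 0) has_field_derivative 0) (at ?A)"
    unfolding homog_Xi[OF l1 s] using deriv_a0[OF l1, of s ?B ?A] unfolding z1 z2 by simp
  have Db: "((\<lambda>y. homog (Xi_poly l s) ?A y 0) has_field_derivative 0) (at ?B)"
    unfolding homog_Xi[OF l1 s] using deriv_b0[OF l1, of s ?A ?B] unfolding z1 z2 by simp
  have Dc: "((\<lambda>z. homog (Xi_poly l s) ?A ?B z) has_field_derivative 0) (at 0)"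
  proof -
    have "(if odd l then 0 else - (of_nat l / 2) * Hu s l (l - 1) ?A ?B 0) = 0"
    proof (cases "odd l")
      case False
      then obtain k where k: "l = 2*k" by blast
      define j where "j = k - 1"
      have j: "l - 1 = 2*j+1" "j \<ge> 1" using k l unfolding j_def by auto
      have "((s * ?B)^2 - ?A^2)^j = 0" using u0 j by simp
      then show ?thesis using Hu_c0[of s l j ?A ?B] j False by simp
    qed simp
    then show ?thesis using homog_dc[OF l1 s, of ?A ?B] by simp
  qed
  show "real_proj_singular (Xi_poly l s) a b c"
    unfolding real_proj_singular_def proj_singular_def using A0 F Da Db Dc t(4) by simp
qed

lemma part3: assumes s: "s = of_real s'" "s'^2 = 1"
  shows "real_proj_singular (Xi_poly 3 s) a b c \<longleftrightarrow> (c = 0 \<and> a \<noteq> 0 \<and> b = - s' * a)"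
proof -
  have l1: "(3::nat) \<ge> 1" by simp
  have sin: "s \<in> {1, -1::complex}" using s by (auto simp: power2_eq_1_iff)
  have s2: "s * s = 1" using sin by auto
  have s'2: "s' * s' = 1" using s(2) by (simp add: power2_eq_square)
  let ?A = "of_real a :: complex" and ?B = "of_real b :: complex"
  have g3: "gfun 3 s ?A ?B = s * ?B + ?A" by (simp add: gfun_def)
  show ?thesis
  proof
    assume "real_proj_singular (Xi_poly 3 s) a b c"
    then have ps: "proj_singular (homog (Xi_poly 3 s)) (of_real a) (of_real b) (of_real c)"
      by (simp add: real_proj_singular_def)
    from c0_real[OF l1 sin ps] obtain s'' where h: "s = of_real s''" "c = 0" "a \<noteq> 0" "(s'' * b)^2 = a^2" by blast
    have "s'' = s'" using h(1) s(1) by simp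
    with h have u0: "(s * ?B)^2 - ?A^2 = 0" using s(1)
      by (metis of_real_mult of_real_power diff_self)
    have "((\<lambda>x. homog (Xi_poly 3 s) x ?B 0) has_field_derivative 0) (at ?A)"
      using ps h(2) unfolding proj_singular_def by simp
    then have "((\<lambda>x. Hf s 3 x ?B 0) has_field_derivative 0) (at ?A)" unfolding homog_Xi[OF l1 sin] .
    from DERIV_unique[OF this deriv_a0[OF l1, of s ?B ?A]] have "0 = gfun 3 s ?A ?B * (- 2 * ?A)"
      unfolding u0 by simp
    then have "s * ?B + ?A = 0" using h(3) g3 by simp
    then have "of_real (s' * b + a) = (0::complex)" using s(1) by simp
    then have "s' * b + a = 0" by (simp only: of_real_eq_0_iff)
    then have "s' * b = - a" by linarith
    then have "s' * (s' * b) = - s' * a" by simp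
    then have "b = - s' * a" using s'2 by (simp add: mult.assoc[symmetric])
    then show "c = 0 \<and> a \<noteq> 0 \<and> b = - s' * a" using h by simp
  next
    assume h: "c = 0 \<and> a \<noteq> 0 \<and> b = - s' * a"
    have cs: "(of_real s' :: complex) * of_real s' = 1" using s'2 by (metis of_real_1 of_real_mult)
    have sB: "s * ?B = - ?A" using h s(1) cs by (simp add: mult.assoc[symmetric])
    have u0: "(s * ?B)^2 - ?A^2 = 0" using sB by simp
    have gz: "gfun 3 s ?A ?B = 0" using sB g3 by simp
    have A0: "?A \<noteq> 0" using h by simp
    have F: "homog (Xi_poly 3 s) ?A ?B 0 = 0" unfolding homog_Xi[OF l1 sin] Hf_c0[OF l1] gz by simp
    have Da: "((\<lambda>x. homog (Xi_poly 3 s) x ?B 0) has_field_derivative 0) (at ?A)"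
      unfolding homog_Xi[OF l1 sin] using deriv_a0[OF l1, of s ?B ?A] unfolding u0 gz by simp
    have Db: "((\<lambda>y. homog (Xi_poly 3 s) ?A y 0) has_field_derivative 0) (at ?B)"
      unfolding homog_Xi[OF l1 sin] using deriv_b0[OF l1, of s ?A ?B] unfolding u0 gz by simp
    have Dc: "((\<lambda>z. homog (Xi_poly 3 s) ?A ?B z) has_field_derivative 0) (at 0)"
      using homog_dc[OF l1 sin, of ?A ?B] by simp
    show "real_proj_singular (Xi_poly 3 s) a b c"
      unfolding real_proj_singular_def proj_singular_def using A0 F Da Db Dc h by simp
  qed
qed

lemma Hf1: "Hf s 1 a b c = s * b + a" by (simp add: Hf_def Df_def)
lemma Hf2: "Hf s 2 a b c = s * b * (s * b) - a^2 - c * (s * b)"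
  by (simp add: Hf_def Df_def Ef_def numeral_2_eq_2)

lemma part12: assumes l: "l \<in> {1, 2}" and s: "s \<in> {1, -1::complex}"
  shows "\<not> proj_singular (homog (Xi_poly l s)) a b c"
proof
  assume ps: "proj_singular (homog (Xi_poly l s)) a b c"
  have l1: "l \<ge> 1" using l by auto
  have s2: "s * s = 1" "s \<noteq> 0" using s by auto
  note ps' = ps[unfolded proj_singular_def homog_Xi[OF l1 s]]
  show False
  proof (cases "l = 1")
    case True
    have "((\<lambda>x. Hf s l x b c) has_field_derivative 1) (at a)"
      unfolding True Hf1 by (auto intro!: derivative_eq_intros)
    with ps' show False using DERIV_unique by fastforce
  next
    case False
    then have l2: "l = 2" using l by auto
    have "((\<lambda>x. Hf s l x b c) has_field_derivative - 2 * a) (at a)"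
      unfolding l2 Hf2 by (auto intro!: derivative_eq_intros)
    with ps' have a0: "a = 0" using DERIV_unique by fastforce
    have "((\<lambda>z. Hf s l a b z) has_field_derivative - (s * b)) (at c)"
      unfolding l2 Hf2 by (auto intro!: derivative_eq_intros)
    with ps' have b0: "b = 0" using DERIV_unique s2 by fastforce
    have "((\<lambda>y. Hf s l a y c) has_field_derivative 2 * s * s * b - c * s) (at b)"
      unfolding l2 Hf2 by (auto intro!: derivative_eq_intros simp: algebra_simps)
    with ps' b0 have c0: "c = 0" using DERIV_unique s2 by fastforce
    show False using ps' a0 b0 c0 by simp
  qed
qed

theorem proposition3p1:
  shows
  "(\<forall>l\<ge>4. \<forall>s\<in>{1, -1}. \<forall>a b c. real_proj_singular (Xi_poly l s) a b c \<longleftrightarrow>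
        (is_point_1s0 1 a b c \<or> is_point_1s0 (-1) a b c))
   \<and> (\<forall>l\<in>{1, 2}. \<forall>s\<in>{1, -1}. \<forall>a b c. \<not> proj_singular (homog (Xi_poly l s)) a b c)
   \<and> (\<forall>a b c. real_proj_singular (Xi_poly 3 1) a b c \<longleftrightarrow> is_point_1s0 (-1) a b c)
   \<and> (\<forall>a b c. real_proj_singular (Xi_poly 3 (-1)) a b c \<longleftrightarrow> is_point_1s0 1 a b c)
   \<and> (\<forall>l\<ge>1. \<forall>s\<in>{1, -1}. \<forall>mu r :: real.
        aff_eval (Xi_poly l s) (of_real mu) (of_real r) = 0 \<longrightarrow>
        \<not> (((\<lambda>x. aff_eval (Xi_poly l s) x (of_real r)) has_field_derivative 0) (at (of_real mu)) \<and>
             ((\<lambda>y. aff_eval (Xi_poly l s) (of_real mu) y) has_field_derivative 0) (at (of_real r))))"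
proof (intro conjI)
  show "\<forall>l\<ge>4. \<forall>s\<in>{1, -1}. \<forall>a b c. real_proj_singular (Xi_poly l s) a b c \<longleftrightarrow>
        (is_point_1s0 1 a b c \<or> is_point_1s0 (-1) a b c)"
    using part4 by blast
  show "\<forall>l\<in>{1, 2}. \<forall>s\<in>{1, -1}. \<forall>a b c. \<not> proj_singular (homog (Xi_poly l s)) a b c"
    using part12 by blast
  show "\<forall>a b c. real_proj_singular (Xi_poly 3 1) a b c \<longleftrightarrow> is_point_1s0 (-1) a b c"
  proof (intro allI)
    fix a b c
    have "real_proj_singular (Xi_poly 3 (of_real 1)) a b c \<longleftrightarrow> (c = 0 \<and> a \<noteq> 0 \<and> b = - 1 * a)"
      by (rule part3) simp_all
    then show "real_proj_singular (Xi_poly 3 1) a b c \<longleftrightarrow> is_point_1s0 (-1) a b c"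
      by (auto simp: is_point_1s0_def)
  qed
  show "\<forall>a b c. real_proj_singular (Xi_poly 3 (-1)) a b c \<longleftrightarrow> is_point_1s0 1 a b c"
  proof (intro allI)
    fix a b c
    have "real_proj_singular (Xi_poly 3 (of_real (-1))) a b c \<longleftrightarrow> (c = 0 \<and> a \<noteq> 0 \<and> b = - (-1) * a)"
      by (rule part3) simp_all
    then show "real_proj_singular (Xi_poly 3 (-1)) a b c \<longleftrightarrow> is_point_1s0 1 a b c"
      by (auto simp: is_point_1s0_def)
  qed
  show "\<forall>l\<ge>1. \<forall>s\<in>{1, -1}. \<forall>mu r :: real.
        aff_eval (Xi_poly l s) (of_real mu) (of_real r) = 0 \<longrightarrow>
        \<not> (((\<lambda>x. aff_eval (Xi_poly l s) x (of_real r)) has_field_derivative 0) (at (of_real mu)) \<and>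
             ((\<lambda>y. aff_eval (Xi_poly l s) (of_real mu) y) has_field_derivative 0) (at (of_real r)))"
    using aff_smooth by blast
qed

end
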